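(* On the $L\times L$ qubit grid, define $$C_{2D}=U^\dagger C_Z U,\qquad U=C_\leftarrow C_\uparrow,\qquad C_Z=\prod_{c=0}^{L-1}\prod_{r=0}^{L-2}\mathrm{CZ}_{(r,c),(r+1,c)},$$ and $W=\Bigl(\prod_{r\text{ odd}}\prod_{c}Z_{(r,c)}\Bigr)C_{2D}$. Then $W$ maps the JW encoding with ordering $m_Z$ to the JW encoding with ordering $m_S$, and also maps the JW encoding with ordering $m_S$ to that with ordering $m_Z$. In particular, $W$ consists of $\mathcal O(N)$ nearest-neighbour CNOT/CZ gates and single-qubit $Z$ gates and has depth $\mathcal O(L)=\mathcal O(\sqrt N)$ on the nearest-neighbour square lattice, $N=L^2$.
   Context: Qubits sit on the grid $\{0,\dots,L-1\}^2$ (sites $(r,c)$, row $r$, column $c$), with nearest-neighbour connectivity (two-qubit gates only between sites at $\ell_1$-distance 1). Fermionic mode $j$ is identified with qubit $j$. A canonical ordering is a bijection $m$ from sites to $\{0,\dots,N-1\}$; the JW encoding with ordering $m$ has Majoranas $\chi^{(m)}_{2j}=X_j\prod_{k:m(k)<m(j)}Z_k$, $\chi^{(m)}_{2j+1}=Y_j\prod_{k:m(k)<m(j)}Z_k$, and a unitary $W$ maps the encoding with ordering $m$ to that with $m'$ if $W\chi^{(m)}_aW^\dagger=\chi^{(m')}_a$ for all $a$. The orderings are $m_Z(r,c)=Lc+(L-1-r)$ and $m_S(r,c)=Lr+c$ for $r$ even, $m_S(r,c)=Lr+(L-1-c)$ for $r$ odd. $x_{(r,c)}$ is the computational-basis bit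 of qubit $(r,c)$. $C_\uparrow$ is the CNOT circuit (CNOT ladders along columns, gates $\mathrm{CNOT}_{(r+1,c)\to(r,c)}$ in order of decreasing $r$) acting by $x_{(r,c)}\mapsto\bigoplus_{r'\ge r}x_{(r',c)}$; $C_\leftarrow$ is the CNOT circuit (ladders along even rows, gates $\mathrm{CNOT}_{(r,c+1)\to(r,c)}$ in order of decreasing $c$) acting by $x_{(r,c)}\mapsto\bigoplus_{c'\ge c}x_{(r,c')}$ for even $r$ and trivially on odd rows. *)

theory Defs
  imports Complex_Main
begin

type_synonym site = "nat \<times> nat"   (* (r, c): row r, column c *)
type_synonym config = "site \<Rightarrow> bool"  (* computational basis state: bit x_(r,c) *)
type_synonym qmat = "config \<Rightarrow> config \<Rightarrow> complex"  (* matrix entries <x|A|y> *)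

definition grid :: "nat \<Rightarrow> site set" where
  "grid L = {(r, c). r < L \<and> c < L}"

definition configs :: "nat \<Rightarrow> config set" where
  "configs L = {x. \<forall>k. k \<notin> grid L \<longrightarrow> \<not> x k}"

definition mmul :: "nat \<Rightarrow> qmat \<Rightarrow> qmat \<Rightarrow> qmat" where
  "mmul L A B = (\<lambda>x y. \<Sum>z\<in>configs L. A x z * B z y)"

definition adj :: "qmat \<Rightarrow> qmat" where
  "adj A = (\<lambda>x y. cnj (A y x))"

definition ident :: qmat where
  "ident = (\<lambda>x y. if x = y then 1 else 0)"

definition flip :: "site \<Rightarrow> config \<Rightarrow> config" where
  "flip j y = y(j := \<not> y j)"

definition Xop :: "site \<Rightarrow> qmat" where
  "Xop j = (\<lambda>x y. if x = flip j y then 1 else 0)"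

definition Yop :: "site \<Rightarrow> qmat" where
  "Yop j = (\<lambda>x y. if x = flip j y then (if y j then - \<i> else \<i>) else 0)"

definition Zop :: "site \<Rightarrow> qmat" where
  "Zop j = (\<lambda>x y. if x = y then (if y j then -1 else 1) else 0)"

definition CNOTop :: "site \<Rightarrow> site \<Rightarrow> qmat" where
  "CNOTop a t = (\<lambda>x y. if x = y(t := (y t \<noteq> y a)) then 1 else 0)"

definition CZop :: "site \<Rightarrow> site \<Rightarrow> qmat" where
  "CZop a b = (\<lambda>x y. if x = y then (if y a \<and> y b then -1 else 1) else 0)"

datatype gate = CNOT site site | CZ site site | Zg site

fun gate_mat :: "gate \<Rightarrow> qmat" where
  "gate_mat (CNOT a t) = CNOTop a t"
| "gate_mat (CZ a b) = CZop a b"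
| "gate_mat (Zg j) = Zop j"

fun gate_qubits :: "gate \<Rightarrow> site set" where
  "gate_qubits (CNOT a t) = {a, t}"
| "gate_qubits (CZ a b) = {a, b}"
| "gate_qubits (Zg j) = {j}"

definition l1dist :: "site \<Rightarrow> site \<Rightarrow> nat" where
  "l1dist p q = (if fst p \<le> fst q then fst q - fst p else fst p - fst q)
              + (if snd p \<le> snd q then snd q - snd p else snd p - snd q)"

fun nn_gate :: "nat \<Rightarrow> gate \<Rightarrow> bool" where
  "nn_gate L (CNOT a t) = (a \<in> grid L \<and> t \<in> grid L \<and> l1dist a t = 1)"
| "nn_gate L (CZ a b) = (a \<in> grid L \<and> b \<in> grid L \<and> l1dist a b = 1)"
| "nn_gate L (Zg j) = (j \<in> grid L)"

text \<open>A circuit is a list of gates in temporal order (first gate applied first):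
  the matrix of [g1,...,gn] is gn ... g1.\<close>
definition circ_mat :: "nat \<Rightarrow> gate list \<Rightarrow> qmat" where
  "circ_mat L gs = foldl (\<lambda>M g. mmul L (gate_mat g) M) ident gs"

text \<open>A layer: gates acting on pairwise disjoint sets of qubits (executed in one time step).\<close>
definition is_layer :: "gate list \<Rightarrow> bool" where
  "is_layer gs = (\<forall>i<length gs. \<forall>j<length gs. i \<noteq> j \<longrightarrow>
                     gate_qubits (gs ! i) \<inter> gate_qubits (gs ! j) = {})"

text \<open>Product of Z_k over a set S of qubits (these commute); written out as the diagonal matrix
  with entry (-1)^(number of k in S with x_k = 1).\<close>
definition Zprod :: "site set \<Rightarrow> qmat" where
  "Zprod S = (\<lambda>x y. if x = y then (-1) ^ card {k\<in>S. y k} else 0)"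

text \<open>Majoranas of the JW encoding with ordering m: index (j, False) is chi_{2j},
  index (j, True) is chi_{2j+1}.\<close>
definition majorana :: "nat \<Rightarrow> (site \<Rightarrow> nat) \<Rightarrow> site \<times> bool \<Rightarrow> qmat" where
  "majorana L m a = (let j = fst a in
     mmul L (if snd a then Yop j else Xop j) (Zprod {k\<in>grid L. m k < m j}))"

definition maps_encoding :: "nat \<Rightarrow> qmat \<Rightarrow> (site \<Rightarrow> nat) \<Rightarrow> (site \<Rightarrow> nat) \<Rightarrow> bool" where
  "maps_encoding L W m m' =
     (\<forall>j\<in>grid L. \<forall>b. mmul L (mmul L W (majorana L m (j, b))) (adj W) = majorana L m' (j, b))"

definition mZ :: "nat \<Rightarrow> site \<Rightarrow> nat" where
  "mZ L s = L * snd s + (L - 1 - fst s)"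

definition mS :: "nat \<Rightarrow> site \<Rightarrow> nat" where
  "mS L s = (if even (fst s) then L * fst s + snd s else L * fst s + (L - 1 - snd s))"

definition C_up_gates :: "nat \<Rightarrow> gate list" where
  "C_up_gates L = concat (map (\<lambda>c. map (\<lambda>r. CNOT (r + 1, c) (r, c)) (rev [0..<L - 1])) [0..<L])"

definition C_left_gates :: "nat \<Rightarrow> gate list" where
  "C_left_gates L = concat (map (\<lambda>r. map (\<lambda>c. CNOT (r, c + 1) (r, c)) (rev [0..<L - 1]))
                              (filter even [0..<L]))"

definition C_Z_gates :: "nat \<Rightarrow> gate list" where
  "C_Z_gates L = concat (map (\<lambda>c. map (\<lambda>r. CZ (r, c) (r + 1, c)) [0..<L - 1]) [0..<L])"

definition Z_odd_gates :: "nat \<Rightarrow> gate list" where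
  "Z_odd_gates L = concat (map (\<lambda>r. map (\<lambda>c. Zg (r, c)) [0..<L]) (filter odd [0..<L]))"

definition C_up :: "nat \<Rightarrow> qmat" where "C_up L = circ_mat L (C_up_gates L)"
definition C_left :: "nat \<Rightarrow> qmat" where "C_left L = circ_mat L (C_left_gates L)"
definition C_Zm :: "nat \<Rightarrow> qmat" where "C_Zm L = circ_mat L (C_Z_gates L)"
definition Uc :: "nat \<Rightarrow> qmat" where "Uc L = mmul L (C_left L) (C_up L)"
definition C2D :: "nat \<Rightarrow> qmat" where
  "C2D L = mmul L (adj (Uc L)) (mmul L (C_Zm L) (Uc L))"
definition Wc :: "nat \<Rightarrow> qmat" where
  "Wc L = mmul L (circ_mat L (Z_odd_gates L)) (C2D L)"

end

theory Submission
  imports Defs "HOL-Library.Z2"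
begin

declare add_bit_eq_xor[simp del] mult_bit_eq_and[simp del]

lemma grid_eq: "grid L = {..<L} \<times> {..<L}" by (auto simp: grid_def)
lemma finite_grid[simp]: "finite (grid L)" by (simp add: grid_eq)

lemma finite_configs[simp]: "finite (configs L)"
proof -
  have "configs L \<subseteq> (\<lambda>S k. k \<in> S) ` Pow (grid L)"
  proof
    fix x assume "x \<in> configs L"
    then have "{k. x k} \<in> Pow (grid L)" "x = (\<lambda>k. k \<in> {k. x k})" by (auto simp: configs_def)
    then show "x \<in> (\<lambda>S k. k \<in> S) ` Pow (grid L)" by blast
  qed
  then show ?thesis by (rule finite_subset) simp
qed

lemma mmul_assoc: "mmul L (mmul L A B) C = mmul L A (mmul L B C)"
  unfolding mmul_def
  apply (rule ext)+
  apply (simp add: sum_distrib_left sum_distrib_right mult.assoc)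
  apply (rule sum.swap)
  done

definition mon :: "nat \<Rightarrow> (config \<Rightarrow> config) \<Rightarrow> (config \<Rightarrow> complex) \<Rightarrow> qmat" where
  "mon L f \<phi> = (\<lambda>x y. if y \<in> configs L \<and> x = f y then \<phi> y else 0)"
definition gen :: "(config \<Rightarrow> config) \<Rightarrow> (config \<Rightarrow> complex) \<Rightarrow> qmat" where
  "gen f \<phi> = (\<lambda>x y. if x = f y then \<phi> y else 0)"

lemma mmul_gen_mono:
  assumes "\<forall>y\<in>configs L. f y \<in> configs L"
  shows "mmul L (gen h \<chi>) (mon L f \<phi>) = mon L (h \<circ> f) (\<lambda>y. \<chi> (f y) * \<phi> y)"
proof (rule ext, rule ext)
  fix x y
  have e: "(\<lambda>z. (if x = h z then \<chi> z else 0) * (if y \<in> configs L \<and> z = f y then \<phi> y else 0))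
     = (\<lambda>z. if z = f y then (if y \<in> configs L \<and> x = h (f y) then \<chi> (f y) * \<phi> y else 0) else 0)"
    by auto
  show "mmul L (gen h \<chi>) (mon L f \<phi>) x y = mon L (h \<circ> f) (\<lambda>y. \<chi> (f y) * \<phi> y) x y"
    unfolding mmul_def gen_def mon_def e using assms by (auto simp: sum.delta')
qed

lemma mmul_mono_mono:
  assumes "\<forall>y\<in>configs L. g y \<in> configs L"
  shows "mmul L (mon L f \<phi>) (mon L g \<psi>) = mon L (f \<circ> g) (\<lambda>y. \<phi> (g y) * \<psi> y)"
proof (rule ext, rule ext)
  fix x y
  have e: "(\<lambda>z. (if z \<in> configs L \<and> x = f z then \<phi> z else 0) * (if y \<in> configs L \<and> z = g y then \<psi> y else 0))
     = (\<lambda>z. if z = g y then (if y \<in> configs L \<and> g y \<in> configs L \<and> x = f (g y) then \<phi> (g y) * \<psi> y else 0) else 0)"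
    by auto
  show "mmul L (mon L f \<phi>) (mon L g \<psi>) x y = mon L (f \<circ> g) (\<lambda>y. \<phi> (g y) * \<psi> y) x y"
    unfolding mmul_def mon_def e using assms by (auto simp: sum.delta')
qed

lemma mmul_gen_gen_id: "mmul L (gen h \<chi>) (gen id \<psi>) = mon L h (\<lambda>y. \<chi> y * \<psi> y)"
proof (rule ext, rule ext)
  fix x y
  have e: "(\<lambda>z. (if x = h z then \<chi> z else 0) * (if z = id y then \<psi> y else 0))
     = (\<lambda>z. if z = y then (if x = h y then \<chi> y * \<psi> y else 0) else 0)"
    by auto
  show "mmul L (gen h \<chi>) (gen id \<psi>) x y = mon L h (\<lambda>y. \<chi> y * \<psi> y) x y"
    unfolding mmul_def gen_def mon_def e by (auto simp: sum.delta')
qed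

lemma mmul_mono_adj_diag:
  "mmul L (mon L f \<phi>) (adj (mon L id \<Phi>)) = mon L f (\<lambda>y. \<phi> y * cnj (\<Phi> y))"
proof (rule ext, rule ext)
  fix x y
  have e: "(\<lambda>z. (if z \<in> configs L \<and> x = f z then \<phi> z else 0) * cnj (if z \<in> configs L \<and> y = id z then \<Phi> z else 0))
     = (\<lambda>z. if z = y then (if y \<in> configs L \<and> x = f y then \<phi> y * cnj (\<Phi> y) else 0) else 0)"
    by auto
  show "mmul L (mon L f \<phi>) (adj (mon L id \<Phi>)) x y = mon L f (\<lambda>y. \<phi> y * cnj (\<Phi> y)) x y"
    unfolding mmul_def mon_def adj_def e by (auto simp: sum.delta')
qed

lemma mmul_adj_mono:
  assumes "inj_on u (configs L)" "\<forall>y\<in>configs L. u y \<in> configs L"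
  shows "mmul L (adj (mon L u \<phi>)) (mon L u \<psi>) = mon L id (\<lambda>y. cnj (\<phi> y) * \<psi> y)"
proof (rule ext, rule ext)
  fix x y
  have e: "(\<lambda>z. cnj (if x \<in> configs L \<and> z = u x then \<phi> x else 0) * (if y \<in> configs L \<and> z = u y then \<psi> y else 0))
     = (\<lambda>z. if z = u y then (if y \<in> configs L \<and> x = y then cnj (\<phi> y) * \<psi> y else 0) else 0)"
    using assms(1) by (intro ext) (auto simp: inj_on_def)
  show "mmul L (adj (mon L u \<phi>)) (mon L u \<psi>) x y = mon L id (\<lambda>y. cnj (\<phi> y) * \<psi> y) x y"
    unfolding mmul_def mon_def adj_def e using assms(2) by (auto simp: sum.delta')
qed

definition agree :: "nat \<Rightarrow> qmat \<Rightarrow> qmat \<Rightarrow> bool" where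
  "agree L A B = (\<forall>x y. x \<in> configs L \<or> y \<in> configs L \<longrightarrow> A x y = B x y)"

lemma agree_refl: "agree L A A" by (simp add: agree_def)

lemma mmul_agree: "agree L A A' \<Longrightarrow> agree L B B' \<Longrightarrow> mmul L A B = mmul L A' B'"
  unfolding agree_def mmul_def by (intro ext sum.cong) auto

lemma adj_agree: "agree L A B \<Longrightarrow> agree L (adj A) (adj B)"
  unfolding agree_def adj_def by auto

lemma mon_cong: "(\<And>y. y \<in> configs L \<Longrightarrow> f y = f' y \<and> \<phi> y = \<phi>' y) \<Longrightarrow> mon L f \<phi> = mon L f' \<phi>'"
  unfolding mon_def by (intro ext) auto

fun gfun :: "gate \<Rightarrow> config \<Rightarrow> config" where
  "gfun (CNOT a t) y = y(t := (y t \<noteq> y a))"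
| "gfun (CZ a b) y = y"
| "gfun (Zg j) y = y"

fun gph :: "gate \<Rightarrow> config \<Rightarrow> complex" where
  "gph (CNOT a t) y = 1"
| "gph (CZ a b) y = (if y a \<and> y b then -1 else 1)"
| "gph (Zg j) y = (if y j then -1 else 1)"

lemma gate_mat_gen: "gate_mat g = gen (gfun g) (gph g)"
  by (cases g) (auto simp: gen_def CNOTop_def CZop_def Zop_def fun_eq_iff)

fun run :: "gate list \<Rightarrow> config \<Rightarrow> config" where
  "run [] y = y"
| "run (g # gs) y = run gs (gfun g y)"

fun ph :: "gate list \<Rightarrow> config \<Rightarrow> complex" where
  "ph [] y = 1"
| "ph (g # gs) y = gph g y * ph gs (gfun g y)"

lemma run_append: "run (xs @ ys) y = run ys (run xs y)"
  by (induction xs arbitrary: y) auto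

lemma ph_append: "ph (xs @ ys) y = ph xs y * ph ys (run xs y)"
  by (induction xs arbitrary: y) auto

definition gok :: "nat \<Rightarrow> gate \<Rightarrow> bool" where
  "gok L g = (gate_qubits g \<subseteq> grid L)"

lemma gfun_configs: "gok L g \<Longrightarrow> y \<in> configs L \<Longrightarrow> gfun g y \<in> configs L"
  by (cases g) (auto simp: gok_def configs_def)

lemma run_configs: "\<forall>g\<in>set gs. gok L g \<Longrightarrow> y \<in> configs L \<Longrightarrow> run gs y \<in> configs L"
  by (induction gs arbitrary: y) (auto simp: gfun_configs)

lemma circ_snoc: "circ_mat L (gs @ [g]) = mmul L (gate_mat g) (circ_mat L gs)"
  by (simp add: circ_mat_def)

lemma circ_eq:
  assumes "\<forall>g\<in>set gs. gok L g" "gs \<noteq> []"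
  shows "circ_mat L gs = mon L (run gs) (ph gs)"
  using assms
proof (induction gs rule: rev_induct)
  case Nil then show ?case by simp
next
  case (snoc g gs)
  have ih: "agree L (circ_mat L gs) (mon L (run gs) (ph gs))"
  proof (cases "gs = []")
    case True
    then show ?thesis by (auto simp: agree_def circ_mat_def ident_def mon_def)
  next
    case False
    then show ?thesis using snoc by (simp add: agree_refl)
  qed
  have "circ_mat L (gs @ [g]) = mmul L (gen (gfun g) (gph g)) (mon L (run gs) (ph gs))"
    by (simp add: circ_snoc gate_mat_gen mmul_agree[OF agree_refl ih])
  also have "\<dots> = mon L (run (gs @ [g])) (ph (gs @ [g]))"
  proof -
    have c: "\<forall>y\<in>configs L. run gs y \<in> configs L" using snoc.prems by (simp add: run_configs)
    show ?thesis unfolding mmul_gen_mono[OF c]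
      by (rule mon_cong) (simp add: run_append ph_append)
  qed
  finally show ?case .
qed

lemma circ_agree:
  assumes "\<forall>g\<in>set gs. gok L g"
  shows "agree L (circ_mat L gs) (mon L (run gs) (ph gs))"
proof (cases "gs = []")
  case True
  then show ?thesis by (auto simp: agree_def circ_mat_def ident_def mon_def)
next
  case False
  then show ?thesis using circ_eq[OF assms] by (simp add: agree_refl)
qed

definition cnotl :: "gate list \<Rightarrow> bool" where
  "cnotl gs = (\<forall>g\<in>set gs. \<exists>a t. g = CNOT a t \<and> a \<noteq> t)"

definition diagl :: "gate list \<Rightarrow> bool" where
  "diagl gs = (\<forall>g\<in>set gs. \<not> (\<exists>a t. g = CNOT a t))"

lemma cnotl_Cons[simp]: "cnotl (g # gs) = ((\<exists>a t. g = CNOT a t \<and> a \<noteq> t) \<and> cnotl gs)"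
  by (auto simp: cnotl_def)
lemma cnotl_append[simp]: "cnotl (xs @ ys) = (cnotl xs \<and> cnotl ys)"
  by (auto simp: cnotl_def)
lemma cnotl_rev[simp]: "cnotl (rev xs) = cnotl xs"
  by (auto simp: cnotl_def)

lemma ph_cnotl: "cnotl gs \<Longrightarrow> ph gs y = 1"
  by (induction gs arbitrary: y) auto

lemma run_rev_cnotl: "cnotl gs \<Longrightarrow> run (rev gs) (run gs y) = y"
proof (induction gs arbitrary: y)
  case Nil then show ?case by simp
next
  case (Cons g gs)
  then obtain a t where g: "g = CNOT a t" "a \<noteq> t" by auto
  have "run (rev (g # gs)) (run (g # gs) y) = gfun g (run (rev gs) (run gs (gfun g y)))"
    by (simp add: run_append)
  also have "\<dots> = gfun g (gfun g y)" using Cons by simp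
  also have "\<dots> = y" using g by (auto simp: fun_eq_iff)
  finally show ?case .
qed

lemma run_inj_cnotl: "cnotl gs \<Longrightarrow> inj (run gs)"
  by (metis injI run_rev_cnotl)

lemma gfun_diag: "\<not> (\<exists>a t. g = CNOT a t) \<Longrightarrow> gfun g y = y"
  by (cases g) auto

lemma diagl_Cons[simp]: "diagl (g # gs) = ((\<not> (\<exists>a t. g = CNOT a t)) \<and> diagl gs)"
  unfolding diagl_def by simp

lemma run_diagl: "diagl gs \<Longrightarrow> run gs y = y"
  by (induction gs arbitrary: y) (simp_all add: gfun_diag)

lemma diagl_append[simp]: "diagl (xs @ ys) = (diagl xs \<and> diagl ys)"
  unfolding diagl_def set_append ball_Un ..

lemma of_bool_neq_bit: "(of_bool (P \<noteq> Q) :: bit) = of_bool P + of_bool Q"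
  by (cases P; cases Q) simp_all

lemma run_par:
  assumes "distinct cs" "inj_on tgt (set cs)" "\<forall>c\<in>set cs. \<forall>c'\<in>set cs. tgt c \<noteq> ctl c'"
  shows "(\<forall>k. k \<notin> tgt ` set cs \<longrightarrow> run (map (\<lambda>c. CNOT (ctl c) (tgt c)) cs) y k = y k)
       \<and> (\<forall>c\<in>set cs. run (map (\<lambda>c. CNOT (ctl c) (tgt c)) cs) y (tgt c) = (y (tgt c) \<noteq> y (ctl c)))"
  using assms
proof (induction cs arbitrary: y)
  case Nil then show ?case by simp
next
  case (Cons c0 cs)
  let ?y0 = "y(tgt c0 := (y (tgt c0) \<noteq> y (ctl c0)))"
  have IH: "(\<forall>k. k \<notin> tgt ` set cs \<longrightarrow> run (map (\<lambda>c. CNOT (ctl c) (tgt c)) cs) ?y0 k = ?y0 k)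
       \<and> (\<forall>c\<in>set cs. run (map (\<lambda>c. CNOT (ctl c) (tgt c)) cs) ?y0 (tgt c) = (?y0 (tgt c) \<noteq> ?y0 (ctl c)))"
    using Cons.prems by (intro Cons.IH) auto
  have nt: "tgt c0 \<notin> tgt ` set cs" using Cons.prems by auto
  have r: "run (map (\<lambda>c. CNOT (ctl c) (tgt c)) (c0 # cs)) y = run (map (\<lambda>c. CNOT (ctl c) (tgt c)) cs) ?y0"
    by simp
  show ?case unfolding r
  proof (intro conjI allI impI ballI)
    fix k assume "k \<notin> tgt ` set (c0 # cs)"
    then have k: "k \<notin> tgt ` set cs" "k \<noteq> tgt c0" by auto
    then have "run (map (\<lambda>c. CNOT (ctl c) (tgt c)) cs) ?y0 k = ?y0 k" using IH by blast
    then show "run (map (\<lambda>c. CNOT (ctl c) (tgt c)) cs) ?y0 k = y k" using k by simp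
  next
    fix c assume c: "c \<in> set (c0 # cs)"
    show "run (map (\<lambda>c. CNOT (ctl c) (tgt c)) cs) ?y0 (tgt c) = (y (tgt c) \<noteq> y (ctl c))"
    proof (cases "c = c0")
      case True
      have "run (map (\<lambda>c. CNOT (ctl c) (tgt c)) cs) ?y0 (tgt c0) = ?y0 (tgt c0)" using IH nt by blast
      then show ?thesis using True by simp
    next
      case False
      then have "c \<in> set cs" using c by auto
      moreover have "tgt c \<noteq> tgt c0" using False Cons.prems \<open>c \<in> set cs\<close> by (auto simp: inj_on_def)
      moreover have "ctl c \<noteq> tgt c0" using Cons.prems \<open>c \<in> set cs\<close> by auto
      ultimately show ?thesis using IH by auto
    qed
  qed
qed

fun R :: "(nat \<Rightarrow> config \<Rightarrow> config) \<Rightarrow> nat \<Rightarrow> config \<Rightarrow> config" where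
  "R st 0 y = y"
| "R st (Suc n) y = R st n (st n y)"

definition injp :: "(nat \<Rightarrow> 'c \<Rightarrow> site) \<Rightarrow> bool" where
  "injp p = (\<forall>i c i' c'. p i c = p i' c' \<longrightarrow> i = i' \<and> c = c')"

lemma injp_D: "injp p \<Longrightarrow> p i c = p i' c' \<Longrightarrow> i = i' \<and> c = c'"
  unfolding injp_def by blast

definition CF :: "(nat \<Rightarrow> 'c \<Rightarrow> site) \<Rightarrow> 'c set \<Rightarrow> nat \<Rightarrow> (config \<Rightarrow> config) \<Rightarrow> bool" where
  "CF p CS n f = (\<forall>y. (\<forall>k. (\<forall>i<n. \<forall>c\<in>CS. k \<noteq> p i c) \<longrightarrow> f y k = y k)
      \<and> (\<forall>c\<in>CS. \<forall>i\<le>n. (of_bool (f y (p i c)) :: bit) = (\<Sum>i'\<in>{i..n}. of_bool (y (p i' c)))))"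

lemma ladder:
  assumes inj: "injp p"
    and s1: "\<And>i y c. c \<in> CS \<Longrightarrow> st i y (p i c) = (y (p i c) \<noteq> y (p (Suc i) c))"
    and s2: "\<And>i y k. (\<forall>c\<in>CS. k \<noteq> p i c) \<Longrightarrow> st i y k = y k"
  shows "CF p CS n (R st n)"
  unfolding CF_def
proof (induction n)
  case 0 show ?case by simp
next
  case (Suc n)
  show ?case
  proof (intro allI conjI impI ballI)
    fix y
    define y1 where "y1 = st n y"
    have IH1: "\<And>k. (\<forall>i<n. \<forall>c\<in>CS. k \<noteq> p i c) \<Longrightarrow> R st n y1 k = y1 k"
      and IH2: "\<And>c i. c \<in> CS \<Longrightarrow> i \<le> n \<Longrightarrow> (of_bool (R st n y1 (p i c)) :: bit) = (\<Sum>i'\<in>{i..n}. of_bool (y1 (p i' c)))"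
      using Suc.IH by blast+
    have R: "R st (Suc n) y = R st n y1" by (simp add: y1_def)
    {
      fix k assume k: "\<forall>i<Suc n. \<forall>c\<in>CS. k \<noteq> p i c"
      then have "R st n y1 k = y1 k" by (intro IH1) auto
      also have "\<dots> = y k" unfolding y1_def using k by (intro s2) auto
      finally show "R st (Suc n) y k = y k" using R by simp
    }
    fix c i assume c: "c \<in> CS" and i: "i \<le> Suc n"
    show "(of_bool (R st (Suc n) y (p i c)) :: bit) = (\<Sum>i'\<in>{i..Suc n}. of_bool (y (p i' c)))"
    proof (cases "i = Suc n")
      case True
      have "R st n y1 (p (Suc n) c) = y1 (p (Suc n) c)"
        using inj by (intro IH1) (auto dest: injp_D)
      also have "\<dots> = y (p (Suc n) c)" unfolding y1_def using inj by (intro s2) (auto dest: injp_D)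
      finally show ?thesis using R True by simp
    next
      case False
      then have i': "i \<le> n" using i by simp
      have e: "\<And>i'. i' \<in> {i..n} \<Longrightarrow> (of_bool (y1 (p i' c)) :: bit) =
          of_bool (y (p i' c)) + (if i' = n then of_bool (y (p (Suc n) c)) else 0)"
      proof -
        fix i' assume "i' \<in> {i..n}"
        show "(of_bool (y1 (p i' c)) :: bit) =
          of_bool (y (p i' c)) + (if i' = n then of_bool (y (p (Suc n) c)) else 0)"
        proof (cases "i' = n")
          case True
          then show ?thesis unfolding y1_def using s1[OF c] by (simp add: of_bool_neq_bit)
        next
          case False
          have "y1 (p i' c) = y (p i' c)" unfolding y1_def using inj False
            by (intro s2) (auto dest: injp_D)
          then show ?thesis using False by simp
        qed
      qed
      have "(of_bool (R st (Suc n) y (p i c)) :: bit) = (\<Sum>i'\<in>{i..n}. of_bool (y1 (p i' c)))"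
        using R IH2[OF c i'] by simp
      also have "\<dots> = (\<Sum>i'\<in>{i..n}. of_bool (y (p i' c)) + (if i' = n then of_bool (y (p (Suc n) c)) else 0))"
        using e by (rule sum.cong[OF refl])
      also have "\<dots> = (\<Sum>i'\<in>{i..n}. of_bool (y (p i' c))) + of_bool (y (p (Suc n) c))"
        using i' by (simp add: sum.distrib)
      also have "\<dots> = (\<Sum>i'\<in>{i..Suc n}. of_bool (y (p i' c)))"
        using i' by simp
      finally show ?thesis .
    qed
  qed
qed

lemma run_concat_rev: "run (concat (map F (rev [0..<n]))) y = R (\<lambda>i. run (F i)) n y"
  by (induction n arbitrary: y) (simp_all add: run_append)

definition lay :: "(nat \<Rightarrow> 'c \<Rightarrow> site) \<Rightarrow> 'c list \<Rightarrow> nat \<Rightarrow> gate list" where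
  "lay p cs n = concat (map (\<lambda>i. map (\<lambda>c. CNOT (p (Suc i) c) (p i c)) cs) (rev [0..<n]))"

definition sq :: "(nat \<Rightarrow> 'c \<Rightarrow> site) \<Rightarrow> 'c list \<Rightarrow> nat \<Rightarrow> gate list" where
  "sq p cs n = concat (map (\<lambda>c. map (\<lambda>i. CNOT (p (Suc i) c) (p i c)) (rev [0..<n])) cs)"

lemma CF_lay:
  assumes inj: "injp p" and d: "distinct cs"
  shows "CF p (set cs) n (run (lay p cs n))"
proof -
  have "run (lay p cs n) = R (\<lambda>i. run (map (\<lambda>c. CNOT (p (Suc i) c) (p i c)) cs)) n"
    unfolding lay_def by (simp add: run_concat_rev fun_eq_iff)
  moreover have "CF p (set cs) n (R (\<lambda>i. run (map (\<lambda>c. CNOT (p (Suc i) c) (p i c)) cs)) n)"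
  proof (rule ladder[OF inj])
    fix i
    have P: "(\<forall>k. k \<notin> (p i) ` set cs \<longrightarrow> run (map (\<lambda>c. CNOT (p (Suc i) c) (p i c)) cs) y k = y k)
       \<and> (\<forall>c\<in>set cs. run (map (\<lambda>c. CNOT (p (Suc i) c) (p i c)) cs) y (p i c) = (y (p i c) \<noteq> y (p (Suc i) c)))" for y
    proof (intro run_par d)
      show "inj_on (p i) (set cs)" using inj unfolding injp_def inj_on_def by blast
      show "\<forall>c\<in>set cs. \<forall>c'\<in>set cs. p i c \<noteq> p (Suc i) c'"
        using inj unfolding injp_def by (metis n_not_Suc_n)
    qed
    show "\<And>y c. c \<in> set cs \<Longrightarrow> run (map (\<lambda>c. CNOT (p (Suc i) c) (p i c)) cs) y (p i c) = (y (p i c) \<noteq> y (p (Suc i) c))"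
      using P by blast
    show "\<And>y k. \<forall>c\<in>set cs. k \<noteq> p i c \<Longrightarrow> run (map (\<lambda>c. CNOT (p (Suc i) c) (p i c)) cs) y k = y k"
      using P by blast
  qed
  ultimately show ?thesis by simp
qed

lemma CF_sq:
  assumes inj: "injp p" and d: "distinct cs"
  shows "CF p (set cs) n (run (sq p cs n))"
  using d
proof (induction cs)
  case Nil then show ?case by (simp add: CF_def sq_def)
next
  case (Cons c cs)
  have sqc: "sq p (c # cs) n = lay p [c] n @ sq p cs n"
    by (simp add: sq_def lay_def)
  have L0: "CF p {c} n (run (lay p [c] n))" using CF_lay[OF inj, of "[c]"] by simp
  have L1: "CF p (set cs) n (run (sq p cs n))" using Cons by simp
  have cn: "c \<notin> set cs" using Cons.prems by simp
  show ?case unfolding CF_def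
  proof (intro allI conjI impI ballI)
    fix y
    define y0 where "y0 = run (lay p [c] n) y"
    have A0: "\<And>k. (\<forall>i<n. k \<noteq> p i c) \<Longrightarrow> y0 k = y k"
      and B0: "\<And>i. i \<le> n \<Longrightarrow> (of_bool (y0 (p i c)) :: bit) = (\<Sum>i'\<in>{i..n}. of_bool (y (p i' c)))"
      using L0 unfolding CF_def y0_def by auto
    have A1: "\<And>k. (\<forall>i<n. \<forall>c\<in>set cs. k \<noteq> p i c) \<Longrightarrow> run (sq p cs n) y0 k = y0 k"
      and B1: "\<And>c i. c \<in> set cs \<Longrightarrow> i \<le> n \<Longrightarrow> (of_bool (run (sq p cs n) y0 (p i c)) :: bit) = (\<Sum>i'\<in>{i..n}. of_bool (y0 (p i' c)))"
      using L1 unfolding CF_def by blast+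
    have r: "run (sq p (c # cs) n) y = run (sq p cs n) y0" by (simp add: sqc run_append y0_def)
    {
      fix k assume k: "\<forall>i<n. \<forall>c'\<in>set (c # cs). k \<noteq> p i c'"
      then show "run (sq p (c # cs) n) y k = y k" unfolding r using A1 A0 by simp
    }
    fix c' i assume c': "c' \<in> set (c # cs)" and i: "i \<le> n"
    show "(of_bool (run (sq p (c # cs) n) y (p i c')) :: bit) = (\<Sum>i'\<in>{i..n}. of_bool (y (p i' c')))"
    proof (cases "c' = c")
      case True
      have "run (sq p cs n) y0 (p i c) = y0 (p i c)"
        using inj cn by (intro A1) (auto dest: injp_D)
      then show ?thesis unfolding r using True B0[OF i] by simp
    next
      case False
      then have c'': "c' \<in> set cs" using c' by simp
      have "\<And>i'. y0 (p i' c') = y (p i' c')"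
        using inj False by (intro A0) (auto dest: injp_D)
      then show ?thesis unfolding r using B1[OF c'' i] by simp
    qed
  qed
qed

lemma bit_add_self[simp]: "(x::bit) + x = 0"
  by (cases x) simp_all

lemma of_bool_neq_bit': "(of_bool (P \<noteq> Q) :: bit) = of_bool P + of_bool Q"
  by (cases P; cases Q) simp_all

lemma of_nat_bit: "(of_nat n :: bit) = of_bool (odd n)"
  by (induction n) (simp_all add: of_bool_neq_bit'[symmetric])

definition V :: "nat \<Rightarrow> (site \<Rightarrow> bit) \<Rightarrow> nat \<Rightarrow> nat \<Rightarrow> bit" where
  "V L Y s c = (\<Sum>r\<in>{s..<L}. Y (r, c))"

definition Uf :: "nat \<Rightarrow> (site \<Rightarrow> bit) \<Rightarrow> nat \<Rightarrow> nat \<Rightarrow> bit" where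
  "Uf L Y r c = (if even r then (\<Sum>c'\<in>{c..<L}. V L Y r c') else V L Y r c)"

definition q :: "nat \<Rightarrow> (site \<Rightarrow> bit) \<Rightarrow> bit" where
  "q L Y = (\<Sum>c<L. \<Sum>r<L-1. Uf L Y r c * Uf L Y (Suc r) c) + (\<Sum>r<L. \<Sum>c<L. of_bool (odd r) * Y (r, c))"

lemma V_add: "V L (\<lambda>k. Y k + Z k) s c = V L Y s c + V L Z s c"
  by (simp add: V_def sum.distrib)

lemma Uf_add: "Uf L (\<lambda>k. Y k + Z k) r c = Uf L Y r c + Uf L Z r c"
  by (simp add: Uf_def V_add sum.distrib)

lemma pw1: "((A::bit) + B) * (A' + B') + A * A' = (A * B' + B * A') + B * B'"
  by (cases A; cases B; cases A'; cases B') simp_all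

lemma pw2: "(o1::bit) * (y + d) + o1 * y = o1 * d"
  by (cases o1; cases y; cases d) simp_all

lemma q_diff:
  "q L (\<lambda>k. Y k + D k) + q L Y =
     (\<Sum>c<L. \<Sum>r<L-1. Uf L Y r c * Uf L D (Suc r) c + Uf L D r c * Uf L Y (Suc r) c)
   + ((\<Sum>c<L. \<Sum>r<L-1. Uf L D r c * Uf L D (Suc r) c) + (\<Sum>r<L. \<Sum>c<L. of_bool (odd r) * D (r, c)))" (is "_ = ?R")
proof -
  have e1: "(\<Sum>c<L. \<Sum>r<L-1. (Uf L Y r c + Uf L D r c) * (Uf L Y (Suc r) c + Uf L D (Suc r) c))
      + (\<Sum>c<L. \<Sum>r<L-1. Uf L Y r c * Uf L Y (Suc r) c)
      = (\<Sum>c<L. \<Sum>r<L-1. (Uf L Y r c + Uf L D r c) * (Uf L Y (Suc r) c + Uf L D (Suc r) c)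
              + Uf L Y r c * Uf L Y (Suc r) c)"
    by (simp add: sum.distrib)
  also have "\<dots> = (\<Sum>c<L. \<Sum>r<L-1. (Uf L Y r c * Uf L D (Suc r) c + Uf L D r c * Uf L Y (Suc r) c)
              + Uf L D r c * Uf L D (Suc r) c)"
    by (simp only: pw1)
  also have "\<dots> = (\<Sum>c<L. \<Sum>r<L-1. Uf L Y r c * Uf L D (Suc r) c + Uf L D r c * Uf L Y (Suc r) c)
       + (\<Sum>c<L. \<Sum>r<L-1. Uf L D r c * Uf L D (Suc r) c)"
    by (simp add: sum.distrib)
  finally have E1: "(\<Sum>c<L. \<Sum>r<L-1. (Uf L Y r c + Uf L D r c) * (Uf L Y (Suc r) c + Uf L D (Suc r) c))
      + (\<Sum>c<L. \<Sum>r<L-1. Uf L Y r c * Uf L Y (Suc r) c) = (\<Sum>c<L. \<Sum>r<L-1. Uf L Y r c * Uf L D (Suc r) c + Uf L D r c * Uf L Y (Suc r) c)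
       + (\<Sum>c<L. \<Sum>r<L-1. Uf L D r c * Uf L D (Suc r) c)" .
  have E2: "(\<Sum>r<L. \<Sum>c<L. of_bool (odd r) * (Y (r, c) + D (r, c))) + (\<Sum>r<L. \<Sum>c<L. of_bool (odd r) * Y (r, c))
      = (\<Sum>r<L. \<Sum>c<L. of_bool (odd r) * D (r, c))"
  proof -
    have "(\<Sum>r<L. \<Sum>c<L. of_bool (odd r) * (Y (r, c) + D (r, c))) + (\<Sum>r<L. \<Sum>c<L. of_bool (odd r) * Y (r, c))
       = (\<Sum>r<L. \<Sum>c<L. of_bool (odd r) * (Y (r, c) + D (r, c)) + of_bool (odd r) * Y (r, c))"
      by (simp add: sum.distrib)
    also have "\<dots> = (\<Sum>r<L. \<Sum>c<L. of_bool (odd r) * D (r, c))" by (simp only: pw2)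
    finally show ?thesis .
  qed
  have "q L (\<lambda>k. Y k + D k) + q L Y =
     ((\<Sum>c<L. \<Sum>r<L-1. (Uf L Y r c + Uf L D r c) * (Uf L Y (Suc r) c + Uf L D (Suc r) c))
      + (\<Sum>c<L. \<Sum>r<L-1. Uf L Y r c * Uf L Y (Suc r) c))
   + ((\<Sum>r<L. \<Sum>c<L. of_bool (odd r) * (Y (r, c) + D (r, c))) + (\<Sum>r<L. \<Sum>c<L. of_bool (odd r) * Y (r, c)))"
    unfolding q_def Uf_add by (simp add: algebra_simps)
  also have "\<dots> = ?R" unfolding E1 E2 by (simp add: algebra_simps)
  finally show ?thesis .
qed

lemma V_delta: "a < L \<Longrightarrow> V L (\<lambda>k. of_bool (k = (a, b))) s c = of_bool (c = b \<and> s \<le> a)"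
proof -
  assume a: "a < L"
  have "V L (\<lambda>k. of_bool (k = (a, b))) s c = (\<Sum>r\<in>{s..<L}. if r = a then of_bool (c = b) else 0)"
    unfolding V_def by (rule sum.cong) auto
  also have "\<dots> = of_bool (c = b \<and> s \<le> a)" using a by (simp add: sum.delta)
  finally show ?thesis .
qed

lemma Uf_delta:
  assumes "a < L" "b < L"
  shows "Uf L (\<lambda>k. of_bool (k = (a, b))) r c = of_bool (r \<le> a) * (if even r then of_bool (c \<le> b) else of_bool (c = b))"
proof (cases "even r")
  case True
  have "(\<Sum>c'\<in>{c..<L}. V L (\<lambda>k. of_bool (k = (a, b))) r c') = (\<Sum>c'\<in>{c..<L}. if c' = b then of_bool (r \<le> a) else 0)"
    using assms by (intro sum.cong) (auto simp: V_delta)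
  also have "\<dots> = of_bool (r \<le> a) * of_bool (c \<le> b)" using assms by (simp add: sum.delta)
  finally show ?thesis using True by (simp add: Uf_def)
next
  case False
  then show ?thesis using assms by (auto simp add: Uf_def V_delta)
qed

lemma sum_pick: "(b::nat) < L \<Longrightarrow> (\<Sum>c<L. f c * of_bool (c = b)) = (f b :: bit)"
proof -
  assume "b < L"
  have "(\<Sum>c<L. f c * of_bool (c = b)) = (\<Sum>c<L. if c = b then f b else 0)" by (rule sum.cong) auto
  also have "\<dots> = f b" using \<open>b < L\<close> by (subst sum.delta) auto
  finally show ?thesis .
qed

lemma dd_part:
  assumes "a < L" "b < L"
  shows "(\<Sum>c<L. \<Sum>r<L-1. Uf L (\<lambda>k. of_bool (k = (a, b))) r c * Uf L (\<lambda>k. of_bool (k = (a, b))) (Suc r) c)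
       + (\<Sum>r<L. \<Sum>c<L. of_bool (odd r) * (of_bool ((r, c) = (a, b)) :: bit)) = 0"
proof -
  have pw: "Uf L (\<lambda>k. of_bool (k = (a, b))) r c * Uf L (\<lambda>k. of_bool (k = (a, b))) (Suc r) c
      = of_bool (Suc r \<le> a) * of_bool (c = b)" for r c
    using assms by (cases "even r") (auto simp: Uf_delta)
  have "(\<Sum>c<L. \<Sum>r<L-1. Uf L (\<lambda>k. of_bool (k = (a, b))) r c * Uf L (\<lambda>k. of_bool (k = (a, b))) (Suc r) c)
     = (\<Sum>c<L. (\<Sum>r<L-1. of_bool (Suc r \<le> a)) * of_bool (c = b))"
    by (simp add: pw sum_distrib_right)
  also have "\<dots> = (\<Sum>r<L-1. of_bool (Suc r \<le> a))" using assms by (simp add: sum_pick)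
  also have "\<dots> = of_nat (card ({..<L-1} \<inter> {r. Suc r \<le> a}))" by simp
  also have "{..<L-1} \<inter> {r. Suc r \<le> a} = {..<a}" using assms by auto
  finally have 1: "(\<Sum>c<L. \<Sum>r<L-1. Uf L (\<lambda>k. of_bool (k = (a, b))) r c * Uf L (\<lambda>k. of_bool (k = (a, b))) (Suc r) c) = of_bool (odd a)"
    by (simp add: of_nat_bit)
  have "(\<Sum>r<L. \<Sum>c<L. of_bool (odd r) * (of_bool ((r, c) = (a, b)) :: bit))
      = (\<Sum>r<L. if r = a then of_bool (odd a) else 0)"
  proof (rule sum.cong[OF refl])
    fix r assume "r \<in> {..<L}"
    have "(\<Sum>c<L. of_bool (odd r) * (of_bool ((r, c) = (a, b)) :: bit)) = (\<Sum>c<L. (of_bool (odd r \<and> r = a)) * of_bool (c = b))"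
      by (rule sum.cong) auto
    also have "\<dots> = of_bool (odd r \<and> r = a)" by (rule sum_pick[OF assms(2)])
    finally show "(\<Sum>c<L. of_bool (odd r) * (of_bool ((r, c) = (a, b)) :: bit)) = (if r = a then of_bool (odd a) else 0)"
      by auto
  qed
  also have "\<dots> = of_bool (odd a)" using assms by (simp add: sum.delta)
  finally show ?thesis using 1 by simp
qed

lemma bit_add_self2[simp]: "(x::bit) + (x + y) = y"
  by (simp add: add.assoc[symmetric])

definition AA :: "nat \<Rightarrow> (site \<Rightarrow> bit) \<Rightarrow> nat \<Rightarrow> nat \<Rightarrow> bit" where
  "AA L Y b s = (\<Sum>c<L. of_bool (c \<le> b) * V L Y s c)"
definition BB :: "nat \<Rightarrow> (site \<Rightarrow> bit) \<Rightarrow> nat \<Rightarrow> nat \<Rightarrow> bit" where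
  "BB L Y b s = (\<Sum>c\<in>{b..<L}. V L Y s c)"
definition GG :: "nat \<Rightarrow> (site \<Rightarrow> bit) \<Rightarrow> nat \<Rightarrow> nat \<Rightarrow> bit" where
  "GG L Y b s = (if even s then BB L Y b s else AA L Y b s)"

lemma GG_L: "GG L Y b L = 0"
  by (simp add: GG_def AA_def BB_def V_def)

lemma cross_r:
  assumes a: "a < L" and b: "b < L"
  shows "(\<Sum>c<L. Uf L Y r c * Uf L (\<lambda>k. of_bool (k = (a, b))) (Suc r) c
              + Uf L (\<lambda>k. of_bool (k = (a, b))) r c * Uf L Y (Suc r) c)
       = of_bool (r < a) * GG L Y b r + of_bool (r \<le> a) * GG L Y b (Suc r)"
proof -
  let ?D = "\<lambda>k. of_bool (k = (a, b))"
  have c1: "(\<Sum>c<L. Uf L Y r c * Uf L ?D (Suc r) c) = of_bool (r < a) * GG L Y b r"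
  proof (cases "even r")
    case True
    have "(\<Sum>c<L. Uf L Y r c * Uf L ?D (Suc r) c) = (\<Sum>c<L. (of_bool (r < a) * Uf L Y r c) * of_bool (c = b))"
      using True a b by (intro sum.cong) (simp_all add: Uf_delta)
    also have "\<dots> = of_bool (r < a) * Uf L Y r b" by (rule sum_pick[OF b])
    finally show ?thesis using True by (simp add: GG_def BB_def Uf_def)
  next
    case False
    have dS: "\<And>c. Uf L ?D (Suc r) c = of_bool (r < a) * of_bool (c \<le> b)" using False a b by (simp add: Uf_delta)
    have yr: "\<And>c. Uf L Y r c = V L Y r c" using False by (simp add: Uf_def)
    have "(\<Sum>c<L. Uf L Y r c * Uf L ?D (Suc r) c) = (\<Sum>c<L. of_bool (r < a) * (of_bool (c \<le> b) * V L Y r c))"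
      unfolding dS yr by (intro sum.cong) (simp_all add: algebra_simps)
    also have "\<dots> = of_bool (r < a) * AA L Y b r" by (simp add: AA_def sum_distrib_left)
    finally show ?thesis using False by (simp add: GG_def)
  qed
  have c2: "(\<Sum>c<L. Uf L ?D r c * Uf L Y (Suc r) c) = of_bool (r \<le> a) * GG L Y b (Suc r)"
  proof (cases "even r")
    case True
    have dS: "\<And>c. Uf L ?D r c = of_bool (r \<le> a) * of_bool (c \<le> b)" using True a b by (simp add: Uf_delta)
    have yr: "\<And>c. Uf L Y (Suc r) c = V L Y (Suc r) c" using True by (simp add: Uf_def)
    have "(\<Sum>c<L. Uf L ?D r c * Uf L Y (Suc r) c) = (\<Sum>c<L. of_bool (r \<le> a) * (of_bool (c \<le> b) * V L Y (Suc r) c))"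
      unfolding dS yr by (intro sum.cong) (simp_all add: algebra_simps)
    also have "\<dots> = of_bool (r \<le> a) * AA L Y b (Suc r)" by (simp add: AA_def sum_distrib_left)
    finally show ?thesis using True by (simp add: GG_def)
  next
    case False
    have "(\<Sum>c<L. Uf L ?D r c * Uf L Y (Suc r) c) = (\<Sum>c<L. (of_bool (r \<le> a) * Uf L Y (Suc r) c) * of_bool (c = b))"
      using False a b by (intro sum.cong) (simp_all add: Uf_delta)
    also have "\<dots> = of_bool (r \<le> a) * Uf L Y (Suc r) b" by (rule sum_pick[OF b])
    finally show ?thesis using False by (simp add: GG_def BB_def Uf_def)
  qed
  show ?thesis using c1 c2 by (simp add: sum.distrib)
qed

lemma tele0: "(\<Sum>r<a. G r + G (Suc r)) = G 0 + (G a :: bit)"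
  by (induction a) (simp_all add: algebra_simps)

lemma tele:
  assumes a: "a < L" and GL: "G L = (0::bit)"
  shows "(\<Sum>r<L-1. of_bool (r < a) * G r + of_bool (r \<le> a) * G (Suc r)) = G 0 + G a + G (Suc a)"
proof -
  let ?f = "\<lambda>r. of_bool (r < a) * G r + of_bool (r \<le> a) * G (Suc r)"
  have an: "a \<le> L - 1" using a by simp
  have "(\<Sum>r\<in>{0..<a}. ?f r) + (\<Sum>r\<in>{a..<L-1}. ?f r) = (\<Sum>r\<in>{0..<L-1}. ?f r)"
    by (rule sum.atLeastLessThan_concat) (use an in auto)
  moreover have eq: "{..<L-1} = {0..<L-1}" by auto
  ultimately have "(\<Sum>r<L-1. ?f r) = (\<Sum>r\<in>{0..<a}. ?f r) + (\<Sum>r\<in>{a..<L-1}. ?f r)"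
    by simp
  also have "(\<Sum>r\<in>{0..<a}. ?f r) = (\<Sum>r<a. G r + G (Suc r))"
    by (simp add: lessThan_atLeast0)
  also have "\<dots> = G 0 + G a" by (rule tele0)
  also have "(\<Sum>r\<in>{a..<L-1}. ?f r) = (\<Sum>r\<in>{a..<L-1}. if r = a then G (Suc a) else 0)"
    by (intro sum.cong) auto
  also have "\<dots> = (if a < L - 1 then G (Suc a) else 0)" by (simp add: sum.delta)
  also have "\<dots> = G (Suc a)"
  proof (cases "a < L - 1")
    case False
    then have "Suc a = L" using a by simp
    then show ?thesis using False GL by simp
  qed simp
  finally show ?thesis by (simp add: algebra_simps)
qed

lemma cross:
  assumes a: "a < L" and b: "b < L"
  shows "(\<Sum>c<L. \<Sum>r<L-1. Uf L Y r c * Uf L (\<lambda>k. of_bool (k = (a, b))) (Suc r) c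
              + Uf L (\<lambda>k. of_bool (k = (a, b))) r c * Uf L Y (Suc r) c)
       = GG L Y b 0 + GG L Y b a + GG L Y b (Suc a)"
proof -
  have "(\<Sum>c<L. \<Sum>r<L-1. Uf L Y r c * Uf L (\<lambda>k. of_bool (k = (a, b))) (Suc r) c
              + Uf L (\<lambda>k. of_bool (k = (a, b))) r c * Uf L Y (Suc r) c)
      = (\<Sum>r<L-1. \<Sum>c<L. Uf L Y r c * Uf L (\<lambda>k. of_bool (k = (a, b))) (Suc r) c
              + Uf L (\<lambda>k. of_bool (k = (a, b))) r c * Uf L Y (Suc r) c)"
    by (rule sum.swap)
  also have "\<dots> = (\<Sum>r<L-1. of_bool (r < a) * GG L Y b r + of_bool (r \<le> a) * GG L Y b (Suc r))"
    using a b by (simp add: cross_r)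
  also have "\<dots> = GG L Y b 0 + GG L Y b a + GG L Y b (Suc a)"
    using a by (rule tele) (rule GG_L)
  finally show ?thesis .
qed

lemma lexlt:
  fixes L c b x x' :: nat
  assumes "x < L" "x' < L"
  shows "(L * c + x < L * b + x') = (c < b \<or> c = b \<and> x < x')"
proof (cases c b rule: linorder_cases)
  case less
  then have "L * Suc c \<le> L * b" by (intro mult_le_mono2) simp
  then have "L * c + x < L * b + x'" using assms by simp
  then show ?thesis using less by simp
next
  case equal then show ?thesis by simp
next
  case greater
  then have "L * Suc b \<le> L * c" by (intro mult_le_mono2) simp
  then have "\<not> L * c + x < L * b + x'" using assms by simp
  then show ?thesis using greater by simp
qed

lemma mZ_lt: "r < L \<Longrightarrow> a < L \<Longrightarrow> (mZ L (r, c) < mZ L (a, b)) = (c < b \<or> c = b \<and> a < r)"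
  unfolding mZ_def by (subst lexlt) auto

lemma mS_lt:
  assumes "r < L" "c < L" "a < L" "b < L"
  shows "(mS L (r, c) < mS L (a, b)) = (r < a \<or> r = a \<and> (if even a then c < b else b < c))"
proof -
  have e: "\<And>s. mS L s = L * fst s + (if even (fst s) then snd s else L - 1 - snd s)"
    by (simp add: mS_def)
  have "(mS L (r, c) < mS L (a, b)) = (r < a \<or> r = a \<and> (if even r then c else L - 1 - c) < (if even a then b else L - 1 - b))"
    unfolding e fst_conv snd_conv using assms by (subst lexlt) auto
  also have "\<dots> = (r < a \<or> r = a \<and> (if even a then c < b else b < c))"
    using assms by auto
  finally show ?thesis .
qed

lemma coef_pw:
  assumes "r < L" "c < L" "a < L" "b < L"
  shows "(of_bool (0 \<le> r \<and> (if even (0::nat) then b \<le> c else c \<le> b)) + of_bool (a \<le> r \<and> (if even a then b \<le> c else c \<le> b))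
          + of_bool (Suc a \<le> r \<and> (if even (Suc a) then b \<le> c else c \<le> b)) :: bit)
       = of_bool (mZ L (r, c) < mZ L (a, b)) + of_bool (mS L (r, c) < mS L (a, b))"
  unfolding mZ_lt[OF assms(1,3)] mS_lt[OF assms]
  unfolding of_bool_neq_bit'[symmetric] of_bool_eq_iff
  by (cases "even a") auto

lemma sum_ivl_ind: "(\<Sum>r\<in>{s..<(L::nat)}. f r) = (\<Sum>r<L. of_bool (s \<le> r) * (f r :: bit))"
proof -
  have "(\<Sum>r<L. of_bool (s \<le> r) * f r) = (\<Sum>r<L. if r \<in> {r. s \<le> r} then f r else 0)"
    by (intro sum.cong) auto
  also have "\<dots> = sum f ({..<L} \<inter> {r. s \<le> r})" by (subst sum.inter_restrict) auto
  also have "{..<L} \<inter> {r. s \<le> r} = {s..<L}" by auto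
  finally show ?thesis by simp
qed

lemma V_sum: "V L Y s c = (\<Sum>r<L. of_bool (s \<le> r) * Y (r, c))"
  unfolding V_def by (rule sum_ivl_ind)

lemma ofb_mul: "of_bool P * (of_bool Q * y) = of_bool (Q \<and> P) * (y::bit)"
  by (cases P; cases Q) simp_all

lemma GG_sum: "GG L Y b s = (\<Sum>c<L. \<Sum>r<L. of_bool (s \<le> r \<and> (if even s then b \<le> c else c \<le> b)) * Y (r, c))"
proof (cases "even s")
  case True
  have "GG L Y b s = (\<Sum>c<L. of_bool (b \<le> c) * V L Y s c)"
    using True by (simp add: GG_def BB_def sum_ivl_ind)
  also have "\<dots> = (\<Sum>c<L. \<Sum>r<L. of_bool (b \<le> c) * (of_bool (s \<le> r) * Y (r, c)))"
    by (simp only: V_sum sum_distrib_left)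
  also have "\<dots> = (\<Sum>c<L. \<Sum>r<L. of_bool (s \<le> r \<and> (if even s then b \<le> c else c \<le> b)) * Y (r, c))"
    using True by (simp only: ofb_mul if_True)
  finally show ?thesis .
next
  case False
  have "GG L Y b s = (\<Sum>c<L. of_bool (c \<le> b) * V L Y s c)"
    using False by (simp add: GG_def AA_def)
  also have "\<dots> = (\<Sum>c<L. \<Sum>r<L. of_bool (c \<le> b) * (of_bool (s \<le> r) * Y (r, c)))"
    by (simp only: V_sum sum_distrib_left)
  also have "\<dots> = (\<Sum>c<L. \<Sum>r<L. of_bool (s \<le> r \<and> (if even s then b \<le> c else c \<le> b)) * Y (r, c))"
    using False by (simp only: ofb_mul if_False)
  finally show ?thesis .
qed

lemma zsum: "(\<Sum>k\<in>{k\<in>grid L. P k}. Y k) = (\<Sum>c<L. \<Sum>r<L. of_bool (P (r, c)) * (Y (r, c) :: bit))"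
proof -
  have "(\<Sum>k\<in>{k\<in>grid L. P k}. Y k) = (\<Sum>k\<in>grid L. if P k then Y k else 0)"
    by (simp add: sum.inter_filter)
  also have "\<dots> = (\<Sum>r<L. \<Sum>c<L. if P (r, c) then Y (r, c) else 0)"
    unfolding grid_eq by (simp add: sum.cartesian_product)
  also have "\<dots> = (\<Sum>c<L. \<Sum>r<L. if P (r, c) then Y (r, c) else 0)"
    by (rule sum.swap)
  also have "\<dots> = (\<Sum>c<L. \<Sum>r<L. of_bool (P (r, c)) * Y (r, c))"
    by (intro sum.cong refl) auto
  finally show ?thesis .
qed

theorem key:
  assumes a: "a < L" and b: "b < L"
  shows "q L (\<lambda>k. Y k + of_bool (k = (a, b))) + q L Y
       = (\<Sum>k\<in>{k\<in>grid L. mZ L k < mZ L (a, b)}. Y k) + (\<Sum>k\<in>{k\<in>grid L. mS L k < mS L (a, b)}. Y k)"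
proof -
  have "q L (\<lambda>k. Y k + of_bool (k = (a, b))) + q L Y = GG L Y b 0 + GG L Y b a + GG L Y b (Suc a)"
    unfolding q_diff cross[OF a b] using dd_part[OF a b] by simp
  also have "\<dots> = (\<Sum>c<L. \<Sum>r<L. (of_bool (0 \<le> r \<and> (if even (0::nat) then b \<le> c else c \<le> b)) + of_bool (a \<le> r \<and> (if even a then b \<le> c else c \<le> b))
          + of_bool (Suc a \<le> r \<and> (if even (Suc a) then b \<le> c else c \<le> b))) * Y (r, c))"
    unfolding GG_sum by (simp only: distrib_right sum.distrib)
  also have "\<dots> = (\<Sum>c<L. \<Sum>r<L. (of_bool (mZ L (r, c) < mZ L (a, b)) + of_bool (mS L (r, c) < mS L (a, b))) * Y (r, c))"
  proof (intro sum.cong refl)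
    fix c r assume "c \<in> {..<L}" "r \<in> {..<L}"
    then show "(of_bool (0 \<le> r \<and> (if even (0::nat) then b \<le> c else c \<le> b)) + of_bool (a \<le> r \<and> (if even a then b \<le> c else c \<le> b))
          + of_bool (Suc a \<le> r \<and> (if even (Suc a) then b \<le> c else c \<le> b))) * Y (r, c)
      = (of_bool (mZ L (r, c) < mZ L (a, b)) + of_bool (mS L (r, c) < mS L (a, b))) * Y (r, c)"
      by (subst coef_pw) (use a b in auto)
  qed
  also have "\<dots> = (\<Sum>k\<in>{k\<in>grid L. mZ L k < mZ L (a, b)}. Y k) + (\<Sum>k\<in>{k\<in>grid L. mS L k < mS L (a, b)}. Y k)"
    unfolding zsum by (simp only: distrib_right sum.distrib)
  finally show ?thesis .
qed

definition Yb :: "config \<Rightarrow> site \<Rightarrow> bit" where "Yb y k = of_bool (y k)"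

definition sg :: "bit \<Rightarrow> complex" where "sg b = (if b = 0 then 1 else -1)"

lemma sg_add: "sg (a + b) = sg a * sg b"
  by (cases a; cases b) (simp_all add: sg_def)

lemma sg_0[simp]: "sg 0 = 1" by (simp add: sg_def)

lemma cnj_sg[simp]: "cnj (sg a) = sg a" by (simp add: sg_def)

lemma sg_of_nat: "sg (of_nat n) = (-1) ^ n"
  by (simp add: of_nat_bit sg_def)

lemma sum_list_upt0: "sum_list (map f [0..<n]) = (\<Sum>i<n. f i)"
  by (induction n) simp_all

fun gb :: "gate \<Rightarrow> config \<Rightarrow> bit" where
  "gb (CNOT a t) y = 0"
| "gb (CZ a b) y = of_bool (y a) * of_bool (y b)"
| "gb (Zg j) y = of_bool (y j)"

lemma ph_diagl: "diagl gs \<Longrightarrow> ph gs y = sg (sum_list (map (\<lambda>g. gb g y) gs))"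
proof (induction gs)
  case Nil then show ?case by simp
next
  case (Cons g gs)
  then have "gph g y = sg (gb g y)" "gfun g y = y"
    by (cases g; auto simp: sg_def)+
  then show ?case using Cons by (simp add: sg_add)
qed

lemma injp_up: "injp (\<lambda>i c. (i, c))" by (simp add: injp_def)
lemma injp_left: "injp (\<lambda>i r. (r, i))" by (simp add: injp_def)

lemma C_up_sq: "C_up_gates L = sq (\<lambda>i c. (i, c)) [0..<L] (L - 1)"
  by (simp add: C_up_gates_def sq_def)

lemma C_left_sq: "C_left_gates L = sq (\<lambda>i r. (r, i)) (filter even [0..<L]) (L - 1)"
  by (simp add: C_left_gates_def sq_def)

lemma set_sq: "g \<in> set (sq p cs n) \<Longrightarrow> \<exists>i c. g = CNOT (p (Suc i) c) (p i c) \<and> i < n \<and> c \<in> set cs"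
  by (auto simp: sq_def) blast

lemma set_lay: "g \<in> set (lay p cs n) \<Longrightarrow> \<exists>i c. g = CNOT (p (Suc i) c) (p i c) \<and> i < n \<and> c \<in> set cs"
  by (auto simp: lay_def) blast

lemma U_closed:
  assumes L: "L \<ge> 1"
    and fu: "CF (\<lambda>i c. (i, c)) (set [0..<L]) (L - 1) fu"
    and fl: "CF (\<lambda>i r. (r, i)) (set (filter even [0..<L])) (L - 1) fl"
    and r: "r < L" and c: "c < L"
  shows "Yb (fl (fu y)) (r, c) = Uf L (Yb y) r c"
proof -
  have U1: "\<And>r c. r < L \<Longrightarrow> c < L \<Longrightarrow> Yb (fu y) (r, c) = V L (Yb y) r c"
  proof -
    fix r c assume r: "r < L" and c: "c < L"
    have "(of_bool (fu y (r, c)) :: bit) = (\<Sum>i'\<in>{r..L-1}. of_bool (y (i', c)))"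
      using fu r c unfolding CF_def by auto
    also have "{r..L-1} = {r..<L}" using L by auto
    finally show "Yb (fu y) (r, c) = V L (Yb y) r c" by (simp add: Yb_def V_def)
  qed
  show ?thesis
  proof (cases "even r")
    case True
    have "(of_bool (fl (fu y) (r, c)) :: bit) = (\<Sum>i'\<in>{c..L-1}. of_bool (fu y (r, i')))"
      using fl r c True unfolding CF_def by auto
    also have "{c..L-1} = {c..<L}" using L by auto
    also have "(\<Sum>i'\<in>{c..<L}. of_bool (fu y (r, i'))) = (\<Sum>i'\<in>{c..<L}. V L (Yb y) r i')"
      using U1[OF r] by (intro sum.cong) (auto simp: Yb_def)
    finally show ?thesis using True by (simp add: Yb_def Uf_def)
  next
    case False
    have "fl (fu y) (r, c) = fu y (r, c)"
      using fl False unfolding CF_def by auto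
    then show ?thesis using False U1[OF r c] by (simp add: Yb_def Uf_def)
  qed
qed

lemma gok_sq:
  assumes "\<And>i c. i \<le> n \<Longrightarrow> c \<in> set cs \<Longrightarrow> p i c \<in> grid L"
  shows "\<forall>g\<in>set (sq p cs n). gok L g"
proof
  fix g assume "g \<in> set (sq p cs n)"
  then obtain i c where "g = CNOT (p (Suc i) c) (p i c)" "i < n" "c \<in> set cs" using set_sq by blast
  then show "gok L g" using assms by (auto simp: gok_def)
qed

lemma gok_lay:
  assumes "\<And>i c. i \<le> n \<Longrightarrow> c \<in> set cs \<Longrightarrow> p i c \<in> grid L"
  shows "\<forall>g\<in>set (lay p cs n). gok L g"
proof
  fix g assume "g \<in> set (lay p cs n)"
  then obtain i c where "g = CNOT (p (Suc i) c) (p i c)" "i < n" "c \<in> set cs" using set_lay by blast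
  then show "gok L g" using assms by (auto simp: gok_def)
qed

lemma sum_list_concat': "sum_list (concat xss) = sum_list (map sum_list xss)"
  by (induction xss) simp_all

lemma cnotl_sq: "injp p \<Longrightarrow> cnotl (sq p cs n)"
  unfolding cnotl_def
proof
  fix g assume p: "injp p" and "g \<in> set (sq p cs n)"
  then obtain i c where "g = CNOT (p (Suc i) c) (p i c)" using set_sq by blast
  moreover have "p (Suc i) c \<noteq> p i c" using injp_D[OF p, of "Suc i" c i c] by auto
  ultimately show "\<exists>a t. g = CNOT a t \<and> a \<noteq> t" by blast
qed

lemma cnotl_lay: "injp p \<Longrightarrow> cnotl (lay p cs n)"
  unfolding cnotl_def
proof
  fix g assume p: "injp p" and "g \<in> set (lay p cs n)"
  then obtain i c where "g = CNOT (p (Suc i) c) (p i c)" using set_lay by blast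
  moreover have "p (Suc i) c \<noteq> p i c" using injp_D[OF p, of "Suc i" c i c] by auto
  ultimately show "\<exists>a t. g = CNOT a t \<and> a \<noteq> t" by blast
qed

lemma ok_up: "L \<ge> 1 \<Longrightarrow> \<forall>g\<in>set (C_up_gates L). gok L g"
  unfolding C_up_sq by (rule gok_sq) (auto simp: grid_def)

lemma ok_left: "L \<ge> 1 \<Longrightarrow> \<forall>g\<in>set (C_left_gates L). gok L g"
  unfolding C_left_sq by (rule gok_sq) (auto simp: grid_def)

lemma cn_up: "cnotl (C_up_gates L)"
  unfolding C_up_sq by (rule cnotl_sq[OF injp_up])

lemma cn_left: "cnotl (C_left_gates L)"
  unfolding C_left_sq by (rule cnotl_sq[OF injp_left])

lemma ok_CZ: "\<forall>g\<in>set (C_Z_gates L). gok L g"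
  by (auto simp: C_Z_gates_def gok_def grid_def)

lemma ok_Zo: "\<forall>g\<in>set (Z_odd_gates L). gok L g"
  by (auto simp: Z_odd_gates_def gok_def grid_def)

lemma diag_CZ: "diagl (C_Z_gates L)"
  by (auto simp: C_Z_gates_def diagl_def)

lemma diag_Zo: "diagl (Z_odd_gates L)"
  by (auto simp: Z_odd_gates_def diagl_def)

lemma ph_CZ: "ph (C_Z_gates L) w = sg (\<Sum>c<L. \<Sum>r<L-1. Yb w (r, c) * Yb w (Suc r, c))"
  unfolding ph_diagl[OF diag_CZ]
  by (simp add: C_Z_gates_def map_concat sum_list_concat' o_def sum_list_upt0 Yb_def)

lemma ph_Zo: "ph (Z_odd_gates L) y = sg (\<Sum>r<L. \<Sum>c<L. of_bool (odd r) * Yb y (r, c))"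
proof -
  have "ph (Z_odd_gates L) y = sg (\<Sum>r<L. if odd r then \<Sum>c<L. Yb y (r, c) else 0)"
    unfolding ph_diagl[OF diag_Zo]
    by (simp add: Z_odd_gates_def map_concat sum_list_concat' o_def sum_list_upt0 Yb_def[symmetric] sum_list_map_filter')
  also have "(\<Sum>r<L. if odd r then \<Sum>c<L. Yb y (r, c) else 0) = (\<Sum>r<L. \<Sum>c<L. of_bool (odd r) * Yb y (r, c))"
    by (intro sum.cong refl) auto
  finally show ?thesis .
qed

lemma ph_one: "cnotl gs \<Longrightarrow> ph gs = (\<lambda>_. 1)"
  by (rule ext) (simp add: ph_cnotl)

lemma run_id: "diagl gs \<Longrightarrow> run gs = id"
  by (rule ext) (simp add: run_diagl)

lemma CF_up: "CF (\<lambda>i c. (i, c)) (set [0..<L]) (L - 1) (run (C_up_gates L))"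
  unfolding C_up_sq by (rule CF_sq[OF injp_up]) simp

lemma CF_left: "CF (\<lambda>i r. (r, i)) (set (filter even [0..<L])) (L - 1) (run (C_left_gates L))"
  unfolding C_left_sq by (rule CF_sq[OF injp_left]) simp

lemma phase_q:
  assumes L: "L \<ge> 1"
    and fu: "CF (\<lambda>i c. (i, c)) (set [0..<L]) (L - 1) fu"
    and fl: "CF (\<lambda>i r. (r, i)) (set (filter even [0..<L])) (L - 1) fl"
  shows "ph (Z_odd_gates L) y * sg (\<Sum>c<L. \<Sum>r<L-1. Yb (fl (fu y)) (r, c) * Yb (fl (fu y)) (Suc r, c)) = sg (q L (Yb y))"
proof -
  have "(\<Sum>c<L. \<Sum>r<L-1. Yb (fl (fu y)) (r, c) * Yb (fl (fu y)) (Suc r, c))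
      = (\<Sum>c<L. \<Sum>r<L-1. Uf L (Yb y) r c * Uf L (Yb y) (Suc r) c)"
    by (intro sum.cong refl) (auto simp: U_closed[OF L fu fl])
  then show ?thesis unfolding ph_Zo q_def by (simp add: sg_add mult.commute)
qed

lemma Wc_mon:
  assumes L: "L \<ge> 1"
  shows "Wc L = mon L id (\<lambda>y. sg (q L (Yb y)))"
proof -
  let ?GU = "C_up_gates L @ C_left_gates L"
  have okGU: "\<forall>g\<in>set ?GU. gok L g" using ok_up[OF L] ok_left[OF L] by auto
  have cU: "\<forall>y\<in>configs L. run (C_up_gates L) y \<in> configs L" using ok_up[OF L] by (simp add: run_configs)
  have cGU: "\<forall>y\<in>configs L. run ?GU y \<in> configs L" using okGU by (simp add: run_configs)
  have injGU: "inj_on (run ?GU) (configs L)"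
    using run_inj_cnotl[of ?GU] cn_up cn_left by (simp add: inj_on_def inj_def)
  have Cu: "agree L (C_up L) (mon L (run (C_up_gates L)) (\<lambda>_. 1))"
    using circ_agree[OF ok_up[OF L]] by (simp add: C_up_def ph_one[OF cn_up])
  have Cl: "agree L (C_left L) (mon L (run (C_left_gates L)) (\<lambda>_. 1))"
    using circ_agree[OF ok_left[OF L]] by (simp add: C_left_def ph_one[OF cn_left])
  have CZ: "agree L (C_Zm L) (mon L id (ph (C_Z_gates L)))"
    using circ_agree[OF ok_CZ] by (simp add: C_Zm_def run_id[OF diag_CZ])
  have Zo: "agree L (circ_mat L (Z_odd_gates L)) (mon L id (ph (Z_odd_gates L)))"
    using circ_agree[OF ok_Zo] by (simp add: run_id[OF diag_Zo])
  have Uc: "Uc L = mon L (run ?GU) (\<lambda>_. 1)"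
  proof -
    have "Uc L = mmul L (mon L (run (C_left_gates L)) (\<lambda>_. 1)) (mon L (run (C_up_gates L)) (\<lambda>_. 1))"
      unfolding Uc_def by (rule mmul_agree[OF Cl Cu])
    also have "\<dots> = mon L (run (C_left_gates L) \<circ> run (C_up_gates L)) (\<lambda>y. 1 * 1)"
      by (rule mmul_mono_mono[OF cU])
    also have "\<dots> = mon L (run ?GU) (\<lambda>_. 1)"
      by (rule mon_cong) (simp add: run_append)
    finally show ?thesis .
  qed
  have M1: "mmul L (C_Zm L) (Uc L) = mon L (run ?GU) (\<lambda>y. ph (C_Z_gates L) (run ?GU y))"
  proof -
    have "mmul L (C_Zm L) (Uc L) = mmul L (mon L id (ph (C_Z_gates L))) (mon L (run ?GU) (\<lambda>_. 1))"
      unfolding Uc by (rule mmul_agree[OF CZ agree_refl])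
    also have "\<dots> = mon L (id \<circ> run ?GU) (\<lambda>y. ph (C_Z_gates L) (run ?GU y) * 1)"
      by (rule mmul_mono_mono[OF cGU])
    also have "\<dots> = mon L (run ?GU) (\<lambda>y. ph (C_Z_gates L) (run ?GU y))"
      by (rule mon_cong) simp
    finally show ?thesis .
  qed
  have C2: "C2D L = mon L id (\<lambda>y. ph (C_Z_gates L) (run ?GU y))"
  proof -
    have "C2D L = mmul L (adj (mon L (run ?GU) (\<lambda>_. 1))) (mon L (run ?GU) (\<lambda>y. ph (C_Z_gates L) (run ?GU y)))"
      unfolding C2D_def M1 by (simp only: Uc)
    also have "\<dots> = mon L id (\<lambda>y. cnj 1 * ph (C_Z_gates L) (run ?GU y))"
      by (rule mmul_adj_mono[OF injGU cGU])
    finally show ?thesis by simp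
  qed
  have "Wc L = mmul L (mon L id (ph (Z_odd_gates L))) (mon L id (\<lambda>y. ph (C_Z_gates L) (run ?GU y)))"
    unfolding Wc_def C2 by (rule mmul_agree[OF Zo agree_refl])
  also have "\<dots> = mon L (id \<circ> id) (\<lambda>y. ph (Z_odd_gates L) (id y) * ph (C_Z_gates L) (run ?GU y))"
    by (rule mmul_mono_mono) simp
  also have "\<dots> = mon L id (\<lambda>y. sg (q L (Yb y)))"
  proof (rule mon_cong)
    fix y
    have "run ?GU y = run (C_left_gates L) (run (C_up_gates L) y)" by (simp add: run_append)
    then show "(id \<circ> id) y = id y \<and> ph (Z_odd_gates L) (id y) * ph (C_Z_gates L) (run ?GU y) = sg (q L (Yb y))"
      using phase_q[OF L CF_up CF_left, of y] by (simp add: ph_CZ)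
  qed
  finally show ?thesis .
qed

lemma Xop_gen: "Xop j = gen (flip j) (\<lambda>_. 1)"
  by (simp add: Xop_def gen_def)
lemma Yop_gen: "Yop j = gen (flip j) (\<lambda>y. if y j then - \<i> else \<i>)"
  by (simp add: Yop_def gen_def fun_eq_iff)
lemma Zprod_gen: "Zprod S = gen id (\<lambda>y. (-1) ^ card {k\<in>S. y k})"
  by (simp add: Zprod_def gen_def fun_eq_iff)

lemma card_sign: "finite S \<Longrightarrow> ((-1) ^ card {k\<in>S. y k} :: complex) = sg (\<Sum>k\<in>S. Yb y k)"
proof -
  assume "finite S"
  then have "(\<Sum>k\<in>S. Yb y k) = of_nat (card (S \<inter> {k. y k}))" by (simp add: Yb_def)
  moreover have "S \<inter> {k. y k} = {k\<in>S. y k}" by auto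
  ultimately show ?thesis by (simp add: sg_of_nat)
qed

lemma majorana_mon:
  "majorana L m (j, b) = mon L (flip j)
     (\<lambda>y. (if b then (if y j then - \<i> else \<i>) else 1) * sg (\<Sum>k\<in>{k\<in>grid L. m k < m j}. Yb y k))"
proof -
  have cs: "\<And>y. ((-1) ^ card {k\<in>{k\<in>grid L. m k < m j}. y k} :: complex) = sg (\<Sum>k\<in>{k\<in>grid L. m k < m j}. Yb y k)"
    by (rule card_sign) simp
  show ?thesis
  proof (cases b)
    case True
    then show ?thesis unfolding majorana_def Let_def fst_conv snd_conv
      by (simp only: if_True Yop_gen Zprod_gen mmul_gen_gen_id cs)
  next
    case False
    then show ?thesis unfolding majorana_def Let_def fst_conv snd_conv
      by (simp only: if_False Xop_gen Zprod_gen mmul_gen_gen_id cs mult_1)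
  qed
qed

lemma flip_configs: "j \<in> grid L \<Longrightarrow> y \<in> configs L \<Longrightarrow> flip j y \<in> configs L"
  by (auto simp: configs_def flip_def)

lemma Yb_flip: "Yb (flip j y) = (\<lambda>k. Yb y k + of_bool (k = j))"
  by (auto simp: Yb_def flip_def fun_eq_iff)

lemma enc_generic:
  assumes L: "L \<ge> 1" and j: "j \<in> grid L"
    and H: "\<And>y. q L (Yb (flip j y)) + q L (Yb y) + (\<Sum>k\<in>{k\<in>grid L. m1 k < m1 j}. Yb y k)
               = (\<Sum>k\<in>{k\<in>grid L. m2 k < m2 j}. Yb y k)"
  shows "mmul L (mmul L (Wc L) (majorana L m1 (j, b))) (adj (Wc L)) = majorana L m2 (j, b)"
proof -
  have fc: "\<forall>y\<in>configs L. flip j y \<in> configs L" using j by (simp add: flip_configs)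
  show ?thesis
    unfolding Wc_mon[OF L] majorana_mon mmul_mono_mono[OF fc] mmul_mono_adj_diag
  proof (rule mon_cong)
    fix y
    let ?c = "(if b then (if y j then - \<i> else \<i>) else 1) :: complex"
    have "sg (q L (Yb (flip j y))) * (?c * sg (\<Sum>k\<in>{k\<in>grid L. m1 k < m1 j}. Yb y k)) * cnj (sg (q L (Yb y)))
        = ?c * sg (q L (Yb (flip j y)) + q L (Yb y) + (\<Sum>k\<in>{k\<in>grid L. m1 k < m1 j}. Yb y k))"
      by (simp add: sg_add)
    also have "\<dots> = ?c * sg (\<Sum>k\<in>{k\<in>grid L. m2 k < m2 j}. Yb y k)" by (simp only: H)
    finally show "(id \<circ> flip j) y = flip j y \<and>
      sg (q L (Yb (flip j y))) * (?c * sg (\<Sum>k\<in>{k\<in>grid L. m1 k < m1 j}. Yb y k)) * cnj (sg (q L (Yb y)))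
        = ?c * sg (\<Sum>k\<in>{k\<in>grid L. m2 k < m2 j}. Yb y k)" by simp
  qed
qed

theorem part1: "L \<ge> 1 \<Longrightarrow> maps_encoding L (Wc L) (mZ L) (mS L) \<and> maps_encoding L (Wc L) (mS L) (mZ L)"
proof -
  assume L: "L \<ge> 1"
  {
    fix j assume j: "j \<in> grid L"
    obtain a b where ab: "j = (a, b)" by (cases j)
    have a: "a < L" and b: "b < L" using j ab by (auto simp: grid_def)
    have K: "\<And>y. q L (Yb (flip j y)) + q L (Yb y) = (\<Sum>k\<in>{k\<in>grid L. mZ L k < mZ L j}. Yb y k) + (\<Sum>k\<in>{k\<in>grid L. mS L k < mS L j}. Yb y k)"
      unfolding Yb_flip ab by (rule key[OF a b])
    have "\<And>y. q L (Yb (flip j y)) + q L (Yb y) + (\<Sum>k\<in>{k\<in>grid L. mZ L k < mZ L j}. Yb y k) = (\<Sum>k\<in>{k\<in>grid L. mS L k < mS L j}. Yb y k)"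
      unfolding K by (simp add: algebra_simps)
    then have 1: "\<And>b. mmul L (mmul L (Wc L) (majorana L (mZ L) (j, b))) (adj (Wc L)) = majorana L (mS L) (j, b)"
      by (rule enc_generic[OF L j])
    have "\<And>y. q L (Yb (flip j y)) + q L (Yb y) + (\<Sum>k\<in>{k\<in>grid L. mS L k < mS L j}. Yb y k) = (\<Sum>k\<in>{k\<in>grid L. mZ L k < mZ L j}. Yb y k)"
      unfolding K by (simp add: algebra_simps)
    then have 2: "\<And>b. mmul L (mmul L (Wc L) (majorana L (mS L) (j, b))) (adj (Wc L)) = majorana L (mZ L) (j, b)"
      by (rule enc_generic[OF L j])
    note 1 2
  }
  then show ?thesis unfolding maps_encoding_def by blast
qed

definition LU :: "nat \<Rightarrow> gate list list" where
  "LU L = map (\<lambda>i. map (\<lambda>c. CNOT (Suc i, c) (i, c)) [0..<L]) (rev [0..<L-1])"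
definition LLs :: "nat \<Rightarrow> gate list list" where
  "LLs L = map (\<lambda>i. map (\<lambda>r. CNOT (r, Suc i) (r, i)) (filter even [0..<L])) (rev [0..<L-1])"
definition LZ :: "nat \<Rightarrow> gate list list" where
  "LZ L = map (\<lambda>r. map (\<lambda>c. CZ (r, c) (Suc r, c)) [0..<L]) [0..<L-1]"
definition LO :: "nat \<Rightarrow> gate list list" where
  "LO L = map (\<lambda>r. map (\<lambda>c. Zg (r, c)) [0..<L]) (filter odd [0..<L])"
definition LE :: "gate list list" where
  "LE = [[Zg (0, 0)], [Zg (0, 0)]]"
definition lyrs :: "nat \<Rightarrow> gate list list" where
  "lyrs L = LU L @ LLs L @ LZ L @ rev (map rev (LU L @ LLs L)) @ LO L @ LE"

lemma concat_LU: "concat (LU L) = lay (\<lambda>i c. (i, c)) [0..<L] (L - 1)"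
  by (simp add: LU_def lay_def)
lemma concat_LLs: "concat (LLs L) = lay (\<lambda>i r. (r, i)) (filter even [0..<L]) (L - 1)"
  by (simp add: LLs_def lay_def)
lemma concat_LO: "concat (LO L) = Z_odd_gates L"
  by (simp add: LO_def Z_odd_gates_def)

lemma concat_rev_map_rev: "concat (rev (map rev xs)) = rev (concat xs)"
  by (induction xs) simp_all

lemma ok_LU: "L \<ge> 1 \<Longrightarrow> \<forall>g\<in>set (concat (LU L)). gok L g"
  unfolding concat_LU by (rule gok_lay) (auto simp: grid_def)
lemma ok_LLs: "L \<ge> 1 \<Longrightarrow> \<forall>g\<in>set (concat (LLs L)). gok L g"
  unfolding concat_LLs by (rule gok_lay) (auto simp: grid_def)
lemma ok_LZ: "\<forall>g\<in>set (concat (LZ L)). gok L g"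
  by (auto simp: LZ_def gok_def grid_def)
lemma ok_LE: "L \<ge> 1 \<Longrightarrow> \<forall>g\<in>set (concat LE). gok L g"
  by (auto simp: LE_def gok_def grid_def)

lemma cn_LU: "cnotl (concat (LU L))"
  unfolding concat_LU by (rule cnotl_lay[OF injp_up])
lemma cn_LLs: "cnotl (concat (LLs L))"
  unfolding concat_LLs by (rule cnotl_lay[OF injp_left])
lemma diag_LZ: "diagl (concat (LZ L))"
  by (auto simp: LZ_def diagl_def)
lemma diag_LE: "diagl (concat LE)"
  by (auto simp: LE_def diagl_def)

lemma ph_LZ: "ph (concat (LZ L)) w = sg (\<Sum>c<L. \<Sum>r<L-1. Yb w (r, c) * Yb w (Suc r, c))"
proof -
  have "ph (concat (LZ L)) w = sg (\<Sum>r<L-1. \<Sum>c<L. Yb w (r, c) * Yb w (Suc r, c))"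
    unfolding ph_diagl[OF diag_LZ]
    by (simp add: LZ_def map_concat sum_list_concat' o_def sum_list_upt0 Yb_def)
  also have "(\<Sum>r<L-1. \<Sum>c<L. Yb w (r, c) * Yb w (Suc r, c)) = (\<Sum>c<L. \<Sum>r<L-1. Yb w (r, c) * Yb w (Suc r, c))"
    by (rule sum.swap)
  finally show ?thesis .
qed

lemma ph_LE: "ph (concat LE) w = 1"
  unfolding ph_diagl[OF diag_LE] by (simp add: LE_def)

lemma CF_LU: "CF (\<lambda>i c. (i, c)) (set [0..<L]) (L - 1) (run (concat (LU L)))"
  unfolding concat_LU by (rule CF_lay[OF injp_up]) simp
lemma CF_LLs: "CF (\<lambda>i r. (r, i)) (set (filter even [0..<L])) (L - 1) (run (concat (LLs L)))"
  unfolding concat_LLs by (rule CF_lay[OF injp_left]) simp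

lemma circ_layers:
  assumes L: "L \<ge> 1"
  shows "circ_mat L (concat (lyrs L)) = Wc L"
proof -
  let ?HU = "concat (LU L) @ concat (LLs L)"
  have cat: "concat (lyrs L) = ?HU @ concat (LZ L) @ rev ?HU @ Z_odd_gates L @ concat LE"
    by (simp add: lyrs_def concat_rev_map_rev concat_LO)
  have ok: "\<forall>g\<in>set (concat (lyrs L)). gok L g"
    unfolding cat using ok_LU[OF L] ok_LLs[OF L] ok_LZ ok_Zo ok_LE[OF L] by auto
  have ne: "concat (lyrs L) \<noteq> []" by (simp add: lyrs_def LE_def)
  have cnH: "cnotl ?HU" using cn_LU cn_LLs by simp
  show ?thesis
    unfolding circ_eq[OF ok ne] Wc_mon[OF L]
  proof (rule mon_cong)
    fix y
    have r1: "run (concat (LZ L)) w = w" for w by (rule run_diagl[OF diag_LZ])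
    have r2: "run (Z_odd_gates L) w = w" for w by (rule run_diagl[OF diag_Zo])
    have r3: "run (concat LE) w = w" for w by (rule run_diagl[OF diag_LE])
    have rr0: "run (rev ?HU) (run ?HU y) = y" by (rule run_rev_cnotl[OF cnH])
    have rr: "run (rev ?HU) (run (concat (LLs L)) (run (concat (LU L)) y)) = y"
      using rr0 unfolding run_append .
    have run_eq: "run (concat (lyrs L)) y = y"
      unfolding cat by (simp only: run_append r1 r2 r3 rr)
    have p1: "ph ?HU y = 1" by (rule ph_cnotl[OF cnH])
    have p2: "ph (rev ?HU) w = 1" for w using cnH by (simp add: ph_cnotl)
    have "ph (concat (lyrs L)) y = ph ?HU y * (ph (concat (LZ L)) (run ?HU y) * (ph (rev ?HU) (run ?HU y)
        * (ph (Z_odd_gates L) y * ph (concat LE) y)))"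
      unfolding cat by (simp only: ph_append run_append r1 r2 r3 rr)
    also have "\<dots> = ph (Z_odd_gates L) y * ph (concat (LZ L)) (run (concat (LLs L)) (run (concat (LU L)) y))"
      by (simp add: ph_cnotl[OF cn_LU] ph_cnotl[OF cn_LLs] p2 ph_LE ph_append run_append del: rev_append)
    also have "\<dots> = sg (q L (Yb y))"
      unfolding ph_LZ by (rule phase_q[OF L CF_LU CF_LLs])
    finally show "run (concat (lyrs L)) y = id y \<and> ph (concat (lyrs L)) y = sg (q L (Yb y))"
      using run_eq by simp
  qed
qed

lemma nn_layers: "L \<ge> 1 \<Longrightarrow> \<forall>g\<in>set (concat (lyrs L)). nn_gate L g"
  by (auto simp: lyrs_def LU_def LLs_def LZ_def LO_def LE_def grid_def l1dist_def)

lemma is_layer_map: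
  assumes "distinct xs" "\<And>x y. x \<in> set xs \<Longrightarrow> y \<in> set xs \<Longrightarrow> x \<noteq> y \<Longrightarrow> gate_qubits (f x) \<inter> gate_qubits (f y) = {}"
  shows "is_layer (map f xs)"
  unfolding is_layer_def
proof (intro allI impI)
  fix i j assume "i < length (map f xs)" "j < length (map f xs)" "i \<noteq> j"
  then have "xs ! i \<noteq> xs ! j" "xs ! i \<in> set xs" "xs ! j \<in> set xs"
    using assms(1) by (auto simp: nth_eq_iff_index_eq)
  then show "gate_qubits (map f xs ! i) \<inter> gate_qubits (map f xs ! j) = {}"
    using assms(2) \<open>i < length (map f xs)\<close> \<open>j < length (map f xs)\<close> by simp
qed

lemma is_layer_rev: "is_layer ly \<Longrightarrow> is_layer (rev ly)"
  unfolding is_layer_def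
proof (intro allI impI)
  fix i j assume H: "\<forall>i<length ly. \<forall>j<length ly. i \<noteq> j \<longrightarrow> gate_qubits (ly ! i) \<inter> gate_qubits (ly ! j) = {}"
    and i: "i < length (rev ly)" and j: "j < length (rev ly)" and ij: "i \<noteq> j"
  have "length ly - Suc i \<noteq> length ly - Suc j" using i j ij by simp
  then show "gate_qubits (rev ly ! i) \<inter> gate_qubits (rev ly ! j) = {}"
    using H i j by (simp add: rev_nth)
qed

lemma layers_ok: "\<forall>ly\<in>set (lyrs L). is_layer ly"
proof -
  have U: "\<forall>ly\<in>set (LU L). is_layer ly" unfolding LU_def by (auto intro!: is_layer_map)
  have Ls: "\<forall>ly\<in>set (LLs L). is_layer ly" unfolding LLs_def by (auto intro!: is_layer_map)
  have Z: "\<forall>ly\<in>set (LZ L). is_layer ly" unfolding LZ_def by (auto intro!: is_layer_map)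
  have O: "\<forall>ly\<in>set (LO L). is_layer ly" unfolding LO_def by (auto intro!: is_layer_map)
  have E: "\<forall>ly\<in>set LE. is_layer ly" unfolding LE_def by (auto simp: is_layer_def)
  show ?thesis unfolding lyrs_def using U Ls Z O E by (auto intro: is_layer_rev)
qed

lemma len_concat_le: "(\<forall>x\<in>set xs. length x \<le> k) \<Longrightarrow> length (concat xs) \<le> length xs * k"
  by (induction xs) auto

lemma layers_len: "L \<ge> 1 \<Longrightarrow> \<forall>ly\<in>set (lyrs L). length ly \<le> L"
proof -
  assume L: "L \<ge> 1"
  have fe: "length (filter even [0..<L]) \<le> L" using length_filter_le[of even "[0..<L]"] by simp
  then show ?thesis using L by (auto simp: lyrs_def LU_def LLs_def LZ_def LO_def LE_def)
qed

lemma num_layers: "L \<ge> 1 \<Longrightarrow> length (lyrs L) \<le> 8 * L"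
proof -
  assume L: "L \<ge> 1"
  have "length (filter odd [0..<L]) \<le> L" using length_filter_le[of odd "[0..<L]"] by simp
  then show ?thesis using L by (simp add: lyrs_def LU_def LLs_def LZ_def LO_def LE_def)
qed

theorem part2: "\<exists>K::nat. \<forall>L\<ge>1. \<exists>layers :: gate list list.
            (\<forall>g\<in>set (concat layers). nn_gate L g)
          \<and> (\<forall>ly\<in>set layers. is_layer ly)
          \<and> circ_mat L (concat layers) = Wc L
          \<and> length (concat layers) \<le> K * (L * L)
          \<and> length layers \<le> K * L"
proof (intro exI allI impI)
  fix L :: nat assume L: "L \<ge> 1"
  have "length (concat (lyrs L)) \<le> length (lyrs L) * L" by (rule len_concat_le[OF layers_len[OF L]])
  also have "\<dots> \<le> (8 * L) * L" by (rule mult_le_mono1[OF num_layers[OF L]])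
  finally have "length (concat (lyrs L)) \<le> 8 * (L * L)" by simp
  then show "(\<forall>g\<in>set (concat (lyrs L)). nn_gate L g)
          \<and> (\<forall>ly\<in>set (lyrs L). is_layer ly)
          \<and> circ_mat L (concat (lyrs L)) = Wc L
          \<and> length (concat (lyrs L)) \<le> 8 * (L * L)
          \<and> length (lyrs L) \<le> 8 * L"
    using nn_layers[OF L] layers_ok circ_layers[OF L] num_layers[OF L] by blast
qed

theorem mainTheorem4:
  shows "(\<forall>L\<ge>1. maps_encoding L (Wc L) (mZ L) (mS L) \<and> maps_encoding L (Wc L) (mS L) (mZ L))
       \<and> (\<exists>K::nat. \<forall>L\<ge>1. \<exists>layers :: gate list list.
            (\<forall>g\<in>set (concat layers). nn_gate L g)
          \<and> (\<forall>ly\<in>set layers. is_layer ly)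
          \<and> circ_mat L (concat layers) = Wc L
          \<and> length (concat layers) \<le> K * (L * L)
          \<and> length layers \<le> K * L)"
    using part1 part2 by blast

end
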